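(* Assume the Standing Setting below. Let $n\in\mathbb Z$ and let $\zeta_1,\dots,\zeta_{m_n}$ be a finite frame for $\mathcal A_n$ with $\sum_{j=1}^{m_n}\phi(\zeta_j)\delta(\zeta_j^* )=0$. Then the associated Grassmann connection satisfies, for all $x\in\mathcal A_n$ and $\xi\in H_0$, $$\sum_{j=1}^{m_n}\phi(\zeta_j)\,\delta_0(\zeta_j^*x)\,\xi=\mu^{-n}\delta(x)\xi .$$
   Context: Standing Setting: $A$ is a unital $C^*$-algebra with a strongly continuous action $\sigma$ of $S^1$; $A_n:=\{a:\sigma_\lambda(a)=\lambda^na\ \forall\lambda\}$, $P_0(a):=\frac1{2\pi}\int_0^{2\pi}\sigma_{e^{it}}(a)dt$. $\mathcal A\subseteq A$ is a norm-dense unital $*$-subalgebra with $P_0(\mathcal A)\subseteq\mathcal A$, generated as a $*$-algebra by $\mathcal A\cap A_1$; $\mathcal A_n:=\mathcal A\cap A_n$. $H_0$ is a separable Hilbert space, $\rho:A_0\to\mathcal B(H_0)$ an injective unital $*$-homomorphism, $D_0$ a selfadjoint operator on $H_0$ such that for every $a\in\mathcal A_0$, $\rho(a)$ preserves $\operatorname{Dom}(D_0)$ and $[D_0,\rho(a)]$ extends to a bounded operator $\delta_0(a)$. $H$ is a separable Hilbert space containing $H_0$ as a closed subspace, $\phi:A\to\mathcal B(H)$ a unital $*$-homomorphism and $\delta:\mathcal A\to\mathcal B(H)$ linear with (1) $\delta(a)\xi=\delta_0(a)\xi$, $\phi(a)\xi=\rho(a)\xi$ for $a\in\mathcal A_0,\xi\in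 H_0$; (2) some $\mu>0$ with $\delta(ab)=\delta(a)\phi(b)+\mu^n\phi(a)\delta(b)$ for $a\in\mathcal A_n$, $b\in\mathcal A$; (3) $\zeta^R_1,\dots,\zeta^R_k,\zeta^L_1,\dots,\zeta^L_m\in\mathcal A_1$ with $\sum_j\zeta_j^R(\zeta_j^R)^*=1=\sum_j(\zeta_j^L)^*\zeta_j^L$ and $\sum_j\phi(\zeta^R_j)\delta((\zeta^R_j)^* )=0=\sum_j\phi(\zeta_j^L)^*\delta(\zeta_j^L)$. A finite frame for $\mathcal A_n$: $\zeta_1,\dots,\zeta_p\in\mathcal A_n$ with $\sum_j\zeta_j\zeta_j^*x=x$ for $x\in\mathcal A_n$. The Grassmann connection of the frame is $\nabla_{\mathrm{Gr}}(x)=\sum_j\zeta_j\otimes\delta_0(\zeta_j^*x)$; identifying $A_n\widehat\otimes_\rho H_0$ with a subspace of $H$ via $x\otimes\xi\mapsto\phi(x)\xi$, its evaluation at $\xi\in H_0$ is the vector $\sum_j\phi(\zeta_j)\delta_0(\zeta_j^*x)\xi$ displayed in the claim. *)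

theory Defs
  imports "HOL-Analysis.Analysis"
begin

text \<open>Complex vector space structure on a real normed vector space, given by an
explicit complex scalar multiplication compatible with the real one and the norm.\<close>
definition complex_normed_structure :: "(complex \<Rightarrow> 'v::real_normed_vector \<Rightarrow> 'v) \<Rightarrow> bool" where
  "complex_normed_structure sc \<longleftrightarrow>
     (\<forall>c x y. sc c (x + y) = sc c x + sc c y) \<and>
     (\<forall>c d x. sc (c + d) x = sc c x + sc d x) \<and>
     (\<forall>c d x. sc (c * d) x = sc c (sc d x)) \<and>
     (\<forall>r x. sc (complex_of_real r) x = r *\<^sub>R x) \<and>
     (\<forall>c x. norm (sc c x) = cmod c * norm x)"

definition unital_cstar_algebra ::
  "(complex \<Rightarrow> 'a::{real_normed_algebra_1,banach} \<Rightarrow> 'a) \<Rightarrow> ('a \<Rightarrow> 'a) \<Rightarrow> bool" where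
  "unital_cstar_algebra sc st \<longleftrightarrow>
     complex_normed_structure sc \<and>
     (\<forall>c x y. sc c (x * y) = sc c x * y \<and> sc c (x * y) = x * sc c y) \<and>
     (\<forall>x y. st (x + y) = st x + st y) \<and>
     (\<forall>c x. st (sc c x) = sc (cnj c) (st x)) \<and>
     (\<forall>x y. st (x * y) = st y * st x) \<and>
     (\<forall>x. st (st x) = x) \<and>
     (\<forall>x. norm (st x * x) = (norm x)\<^sup>2)"

text \<open>Complex Hilbert space structure on a real Banach space (the whole type):
inner product linear in the first argument, norm induced by the inner product.\<close>
definition complex_hilbert ::
  "(complex \<Rightarrow> 'h::banach \<Rightarrow> 'h) \<Rightarrow> ('h \<Rightarrow> 'h \<Rightarrow> complex) \<Rightarrow> bool" where
  "complex_hilbert sc ip \<longleftrightarrow>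
     complex_normed_structure sc \<and>
     (\<forall>x y z. ip (x + y) z = ip x z + ip y z) \<and>
     (\<forall>c x y. ip (sc c x) y = c * ip x y) \<and>
     (\<forall>x y. ip y x = cnj (ip x y)) \<and>
     (\<forall>x. ip x x = complex_of_real ((norm x)\<^sup>2))"

definition separable_set :: "'h::metric_space set \<Rightarrow> bool" where
  "separable_set S \<longleftrightarrow> (\<exists>D. countable D \<and> D \<subseteq> S \<and> S \<subseteq> closure D)"

definition complex_subspace :: "(complex \<Rightarrow> 'h::real_vector \<Rightarrow> 'h) \<Rightarrow> 'h set \<Rightarrow> bool" where
  "complex_subspace sc S \<longleftrightarrow> 0 \<in> S \<and> (\<forall>x\<in>S. \<forall>y\<in>S. x + y \<in> S) \<and> (\<forall>c. \<forall>x\<in>S. sc c x \<in> S)"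

definition bounded_clinear_op :: "(complex \<Rightarrow> 'h::real_normed_vector \<Rightarrow> 'h) \<Rightarrow> ('h \<Rightarrow> 'h) \<Rightarrow> bool" where
  "bounded_clinear_op sc f \<longleftrightarrow> bounded_linear f \<and> (\<forall>c x. f (sc c x) = sc c (f x))"

text \<open>Bounded complex-linear operator on the closed subspace S (an element of B(S));
only its values on S matter.\<close>
definition bounded_clinear_on :: "(complex \<Rightarrow> 'h::real_normed_vector \<Rightarrow> 'h) \<Rightarrow> 'h set \<Rightarrow> ('h \<Rightarrow> 'h) \<Rightarrow> bool" where
  "bounded_clinear_on sc S f \<longleftrightarrow>
     f ` S \<subseteq> S \<and>
     (\<forall>x\<in>S. \<forall>y\<in>S. f (x + y) = f x + f y) \<and>
     (\<forall>c. \<forall>x\<in>S. f (sc c x) = sc c (f x)) \<and>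
     (\<exists>K. \<forall>x\<in>S. norm (f x) \<le> K * norm x)"

definition spectral_subspace ::
  "(complex \<Rightarrow> 'a \<Rightarrow> 'a) \<Rightarrow> (complex \<Rightarrow> 'a \<Rightarrow> 'a) \<Rightarrow> int \<Rightarrow> 'a set" where
  "spectral_subspace sc \<sigma> n = {a. \<forall>l\<in>sphere (0::complex) 1. \<sigma> l a = sc (l powi n) a}"

definition P0 :: "(complex \<Rightarrow> 'a::real_normed_vector \<Rightarrow> 'a) \<Rightarrow> 'a \<Rightarrow> 'a" where
  "P0 \<sigma> a = (1 / (2 * pi)) *\<^sub>R integral {0..2*pi} (\<lambda>t. \<sigma> (cis t) a)"

definition circle_action ::
  "(complex \<Rightarrow> 'a::{real_normed_algebra_1} \<Rightarrow> 'a) \<Rightarrow> ('a \<Rightarrow> 'a) \<Rightarrow> (complex \<Rightarrow> 'a \<Rightarrow> 'a) \<Rightarrow> bool" where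
  "circle_action sc st \<sigma> \<longleftrightarrow>
     (\<forall>l\<in>sphere 0 1. \<forall>a b. \<sigma> l (a + b) = \<sigma> l a + \<sigma> l b) \<and>
     (\<forall>l\<in>sphere 0 1. \<forall>c a. \<sigma> l (sc c a) = sc c (\<sigma> l a)) \<and>
     (\<forall>l\<in>sphere 0 1. \<forall>a b. \<sigma> l (a * b) = \<sigma> l a * \<sigma> l b) \<and>
     (\<forall>l\<in>sphere 0 1. \<forall>a. \<sigma> l (st a) = st (\<sigma> l a)) \<and>
     (\<forall>l\<in>sphere 0 1. \<sigma> l 1 = 1) \<and>
     (\<forall>a. \<sigma> 1 a = a) \<and>
     (\<forall>l\<in>sphere 0 1. \<forall>m\<in>sphere 0 1. \<forall>a. \<sigma> (l * m) a = \<sigma> l (\<sigma> m a)) \<and>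
     (\<forall>a. continuous_on (sphere 0 1) (\<lambda>l. \<sigma> l a))"

inductive_set star_alg_gen ::
  "(complex \<Rightarrow> 'a::ring_1 \<Rightarrow> 'a) \<Rightarrow> ('a \<Rightarrow> 'a) \<Rightarrow> 'a set \<Rightarrow> 'a set"
  for sc :: "complex \<Rightarrow> 'a \<Rightarrow> 'a" and st :: "'a \<Rightarrow> 'a" and S :: "'a set" where
  gen_one: "1 \<in> star_alg_gen sc st S"
| gen_base: "x \<in> S \<Longrightarrow> x \<in> star_alg_gen sc st S"
| gen_add: "x \<in> star_alg_gen sc st S \<Longrightarrow> y \<in> star_alg_gen sc st S \<Longrightarrow> x + y \<in> star_alg_gen sc st S"
| gen_scale: "x \<in> star_alg_gen sc st S \<Longrightarrow> sc c x \<in> star_alg_gen sc st S"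
| gen_mult: "x \<in> star_alg_gen sc st S \<Longrightarrow> y \<in> star_alg_gen sc st S \<Longrightarrow> x * y \<in> star_alg_gen sc st S"
| gen_star: "x \<in> star_alg_gen sc st S \<Longrightarrow> st x \<in> star_alg_gen sc st S"

definition unital_star_subalgebra ::
  "(complex \<Rightarrow> 'a::ring_1 \<Rightarrow> 'a) \<Rightarrow> ('a \<Rightarrow> 'a) \<Rightarrow> 'a set \<Rightarrow> bool" where
  "unital_star_subalgebra sc st B \<longleftrightarrow>
     1 \<in> B \<and> (\<forall>x\<in>B. \<forall>y\<in>B. x + y \<in> B \<and> x * y \<in> B) \<and>
     (\<forall>c. \<forall>x\<in>B. sc c x \<in> B) \<and> (\<forall>x\<in>B. st x \<in> B)"

text \<open>Selfadjoint (possibly unbounded) operator D with domain Dom on the closed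
subspace H0: densely defined, symmetric, and Dom(D^*) contained in Dom(D).\<close>
definition selfadjoint_on ::
  "(complex \<Rightarrow> 'h::real_normed_vector \<Rightarrow> 'h) \<Rightarrow> ('h \<Rightarrow> 'h \<Rightarrow> complex) \<Rightarrow> 'h set \<Rightarrow> 'h set \<Rightarrow> ('h \<Rightarrow> 'h) \<Rightarrow> bool" where
  "selfadjoint_on sc ip H0 Dom D \<longleftrightarrow>
     Dom \<subseteq> H0 \<and> complex_subspace sc Dom \<and> H0 \<subseteq> closure Dom \<and>
     D ` Dom \<subseteq> H0 \<and>
     (\<forall>x\<in>Dom. \<forall>y\<in>Dom. D (x + y) = D x + D y) \<and>
     (\<forall>c. \<forall>x\<in>Dom. D (sc c x) = sc c (D x)) \<and>
     (\<forall>x\<in>Dom. \<forall>y\<in>Dom. ip (D x) y = ip x (D y)) \<and>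
     (\<forall>y\<in>H0. (\<exists>z\<in>H0. \<forall>x\<in>Dom. ip (D x) y = ip x z) \<longrightarrow> y \<in> Dom)"

end

theory Submission
  imports Defs
begin


lemma cns_facts:
  assumes "complex_normed_structure sc"
  shows "sc 1 x = x" "sc c 0 = 0" "sc c (x + y) = sc c x + sc c y"
    "sc c (sc d x) = sc (c * d) x"
proof -
  have "sc (complex_of_real 1) x = 1 *\<^sub>R x" using assms unfolding complex_normed_structure_def by blast
  then show "sc 1 x = x" by simp
  show add: "sc c (x + y) = sc c x + sc c y" using assms unfolding complex_normed_structure_def by blast
  have "sc c (0 + 0) = sc c 0 + sc c 0" using assms unfolding complex_normed_structure_def by blast
  then show "sc c 0 = 0" by simp
  show "sc c (sc d x) = sc (c * d) x" using assms unfolding complex_normed_structure_def by metis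
qed

lemma cns_sum:
  assumes "complex_normed_structure sc"
  shows "sc c (\<Sum>j<(N::nat). f j) = (\<Sum>j<N. sc c (f j))"
  by (induction N) (simp_all add: cns_facts[OF assms])

lemma sphere_inv:
  assumes "(l::complex) \<in> sphere 0 1"
  shows "cnj l = inverse l" "l \<noteq> 0"
proof -
  have n: "cmod l = 1" using assms by simp
  then show "l \<noteq> 0" by auto
  have "l * cnj l = 1" using complex_norm_square[of l] n by simp
  then show "cnj l = inverse l" using \<open>l \<noteq> 0\<close> by (simp add: field_simps)
qed

lemma spec_mult:
  assumes cs: "unital_cstar_algebra sc st" and act: "circle_action sc st \<sigma>"
    and a: "a \<in> spectral_subspace sc \<sigma> i" and b: "b \<in> spectral_subspace sc \<sigma> j"
  shows "a * b \<in> spectral_subspace sc \<sigma> (i + j)"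
  unfolding spectral_subspace_def
proof (intro CollectI ballI)
  fix l :: complex assume l: "l \<in> sphere 0 1"
  have cns: "complex_normed_structure sc" using cs unfolding unital_cstar_algebra_def by blast
  have scm: "\<And>c x y. sc c (x * y) = sc c x * y \<and> sc c (x * y) = x * sc c y"
    using cs unfolding unital_cstar_algebra_def by blast
  have "\<sigma> l (a * b) = \<sigma> l a * \<sigma> l b" using act l unfolding circle_action_def by blast
  also have "\<dots> = sc (l powi i) a * sc (l powi j) b" using a b l unfolding spectral_subspace_def by auto
  also have "\<dots> = sc (l powi i) (sc (l powi j) (a * b))" using scm by metis
  also have "\<dots> = sc (l powi i * l powi j) (a * b)" using cns_facts[OF cns] by metis
  also have "l powi i * l powi j = l powi (i + j)" using sphere_inv(2)[OF l] by (simp add: power_int_add)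
  finally show "\<sigma> l (a * b) = sc (l powi (i + j)) (a * b)" .
qed

lemma spec_star:
  assumes cs: "unital_cstar_algebra sc st" and act: "circle_action sc st \<sigma>"
    and a: "a \<in> spectral_subspace sc \<sigma> i"
  shows "st a \<in> spectral_subspace sc \<sigma> (- i)"
  unfolding spectral_subspace_def
proof (intro CollectI ballI)
  fix l :: complex assume l: "l \<in> sphere 0 1"
  have "\<sigma> l (st a) = st (\<sigma> l a)" using act l unfolding circle_action_def by blast
  also have "\<dots> = st (sc (l powi i) a)" using a l unfolding spectral_subspace_def by auto
  also have "\<dots> = sc (cnj (l powi i)) (st a)" using cs unfolding unital_cstar_algebra_def by blast
  also have "cnj (l powi i) = l powi (- i)" using sphere_inv[OF l]
    by (simp add: power_int_minus power_int_inverse)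
  finally show "\<sigma> l (st a) = sc (l powi (- i)) (st a)" .
qed

lemma spec_one:
  assumes cs: "unital_cstar_algebra sc st" and act: "circle_action sc st \<sigma>"
  shows "1 \<in> spectral_subspace sc \<sigma> 0"
proof -
  have cns: "complex_normed_structure sc" using cs unfolding unital_cstar_algebra_def by blast
  show ?thesis unfolding spectral_subspace_def
    using act cns_facts(1)[OF cns] unfolding circle_action_def by auto
qed

definition Jset :: "'a set \<Rightarrow> 'a::ring_1 set" where
  "Jset S = {y. \<exists>ps. set ps \<subseteq> S \<times> UNIV \<and> y = sum_list (map (\<lambda>(a,c). a*c) ps)}"

lemma Jset_base: "a \<in> S \<Longrightarrow> a \<in> Jset S"
  unfolding Jset_def by (intro CollectI exI[of _ "[(a,1)]"]) auto

lemma Jset_zero: "0 \<in> Jset S"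
  unfolding Jset_def by (intro CollectI exI[of _ "[]"]) auto

lemma Jset_add: "y \<in> Jset S \<Longrightarrow> z \<in> Jset S \<Longrightarrow> y + z \<in> Jset S"
  unfolding Jset_def
proof clarify
  fix ps qs :: "('a \<times> 'a) list" assume "set ps \<subseteq> S \<times> UNIV" "set qs \<subseteq> S \<times> UNIV"
  then show "\<exists>rs. set rs \<subseteq> S \<times> UNIV \<and> sum_list (map (\<lambda>(a,c). a*c) ps) + sum_list (map (\<lambda>(a,c). a*c) qs) = sum_list (map (\<lambda>(a,c). a*c) rs)"
    by (intro exI[of _ "ps @ qs"]) auto
qed

lemma Jset_sum: "(\<And>j. j < (N::nat) \<Longrightarrow> f j \<in> Jset S) \<Longrightarrow> (\<Sum>j<N. f j) \<in> Jset S"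
  by (induction N) (auto intro: Jset_zero Jset_add)

lemma sum_list_rmult: fixes ps :: "('a::ring_1 \<times> 'a) list" shows "sum_list (map (\<lambda>(a,c). a*c) ps) * d = sum_list (map (\<lambda>(a,c). a*c) (map (\<lambda>(a,c). (a, c*d)) ps))"
  by (induction ps) (auto simp: algebra_simps)

lemma sum_list_lmult: fixes ps :: "('a::ring_1 \<times> 'a) list" shows "z * sum_list (map (\<lambda>(a,c). a*c) ps) = sum_list (map (\<lambda>(a,c). a*c) (map (\<lambda>(a,c). (z*a, c)) ps))"
  by (induction ps) (auto simp: algebra_simps)

lemma Jset_rmult: "y \<in> Jset S \<Longrightarrow> y * d \<in> Jset S"
  unfolding Jset_def
proof clarify
  fix ps :: "('a \<times> 'a) list" assume "set ps \<subseteq> S \<times> UNIV"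
  then show "\<exists>qs. set qs \<subseteq> S \<times> UNIV \<and> sum_list (map (\<lambda>(a,c). a*c) ps) * d = sum_list (map (\<lambda>(a,c). a*c) qs)"
    by (intro exI[of _ "map (\<lambda>(a,c). (a, c*d)) ps"]) (auto simp: sum_list_rmult)
qed

lemma Jset_lmult: "y \<in> Jset S \<Longrightarrow> (\<And>a. a \<in> S \<Longrightarrow> z * a \<in> T) \<Longrightarrow> z * y \<in> Jset T"
  unfolding Jset_def
proof clarify
  fix ps :: "('a \<times> 'a) list" assume "set ps \<subseteq> S \<times> UNIV" "(\<And>a. a \<in> S \<Longrightarrow> z * a \<in> T)"
  then show "\<exists>qs. set qs \<subseteq> T \<times> UNIV \<and> z * sum_list (map (\<lambda>(a,c). a*c) ps) = sum_list (map (\<lambda>(a,c). a*c) qs)"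
    by (intro exI[of _ "map (\<lambda>(a,c). (z*a, c)) ps"]) (auto simp: sum_list_lmult)
qed

lemma Jset_fix: "y \<in> Jset S \<Longrightarrow> (\<And>a. a \<in> S \<Longrightarrow> e * a = a) \<Longrightarrow> e * y = y"
  unfolding Jset_def
proof clarify
  fix ps :: "('a \<times> 'a) list" assume "set ps \<subseteq> S \<times> UNIV" "(\<And>a. a \<in> S \<Longrightarrow> e * a = a)"
  then show "e * sum_list (map (\<lambda>(a,c). a*c) ps) = sum_list (map (\<lambda>(a,c). a*c) ps)"
    by (induction ps) (auto simp: distrib_left simp flip: mult.assoc)
qed

theorem proposition7p7:
  fixes scA :: "complex \<Rightarrow> 'a::{real_normed_algebra_1,banach} \<Rightarrow> 'a"
    and st :: "'a \<Rightarrow> 'a"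
    and \<sigma> :: "complex \<Rightarrow> 'a \<Rightarrow> 'a"
    and \<A> :: "'a set"
    and scH :: "complex \<Rightarrow> 'h::banach \<Rightarrow> 'h"
    and ip :: "'h \<Rightarrow> 'h \<Rightarrow> complex"
    and H0 :: "'h set"
    and \<rho> :: "'a \<Rightarrow> 'h \<Rightarrow> 'h"
    and DomD :: "'h set"
    and D0 :: "'h \<Rightarrow> 'h"
    and \<delta>0 :: "'a \<Rightarrow> 'h \<Rightarrow> 'h"
    and \<phi> :: "'a \<Rightarrow> 'h \<Rightarrow> 'h"
    and \<delta> :: "'a \<Rightarrow> 'h \<Rightarrow> 'h"
    and \<mu> :: real
    and zR zL :: "nat \<Rightarrow> 'a"
    and k m :: nat
    and n :: int
    and \<zeta> :: "nat \<Rightarrow> 'a"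
    and mn :: nat
  defines "A \<equiv> spectral_subspace scA \<sigma>"
  assumes cstar: "unital_cstar_algebra scA st"
    and action: "circle_action scA st \<sigma>"
    (* the dense subalgebra \<A> *)
    and sub: "unital_star_subalgebra scA st \<A>"
    and dense: "closure \<A> = UNIV"
    and P0_pres: "\<forall>a\<in>\<A>. P0 \<sigma> a \<in> \<A>"
    and generated: "\<A> = star_alg_gen scA st (\<A> \<inter> A 1)"
    (* Hilbert spaces *)
    and hilb: "complex_hilbert scH ip"
    and sepH: "separable_set (UNIV :: 'h set)"
    and H0_sub: "complex_subspace scH H0" and H0_closed: "closed H0"
    and sepH0: "separable_set H0"
    (* rho : A_0 -> B(H_0) injective unital *-homomorphism *)
    and rho_bdd: "\<forall>a\<in>A 0. bounded_clinear_on scH H0 (\<rho> a)"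
    and rho_add: "\<forall>a\<in>A 0. \<forall>b\<in>A 0. \<forall>x\<in>H0. \<rho> (a + b) x = \<rho> a x + \<rho> b x"
    and rho_scale: "\<forall>c. \<forall>a\<in>A 0. \<forall>x\<in>H0. \<rho> (scA c a) x = scH c (\<rho> a x)"
    and rho_mult: "\<forall>a\<in>A 0. \<forall>b\<in>A 0. \<forall>x\<in>H0. \<rho> (a * b) x = \<rho> a (\<rho> b x)"
    and rho_one: "\<forall>x\<in>H0. \<rho> 1 x = x"
    and rho_star: "\<forall>a\<in>A 0. \<forall>x\<in>H0. \<forall>y\<in>H0. ip (\<rho> a x) y = ip x (\<rho> (st a) y)"
    and rho_inj: "\<forall>a\<in>A 0. \<forall>b\<in>A 0. (\<forall>x\<in>H0. \<rho> a x = \<rho> b x) \<longrightarrow> a = b"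
    (* D_0 selfadjoint on H_0, bounded commutators *)
    and D0_sa: "selfadjoint_on scH ip H0 DomD D0"
    and rho_dom: "\<forall>a\<in>\<A> \<inter> A 0. \<rho> a ` DomD \<subseteq> DomD"
    and delta0_bdd: "\<forall>a\<in>\<A> \<inter> A 0. bounded_clinear_on scH H0 (\<delta>0 a)"
    and delta0_comm: "\<forall>a\<in>\<A> \<inter> A 0. \<forall>x\<in>DomD. \<delta>0 a x = D0 (\<rho> a x) - \<rho> a (D0 x)"
    (* phi : A -> B(H) unital *-homomorphism *)
    and phi_bdd: "\<forall>a. bounded_clinear_op scH (\<phi> a)"
    and phi_add: "\<forall>a b x. \<phi> (a + b) x = \<phi> a x + \<phi> b x"
    and phi_scale: "\<forall>c a x. \<phi> (scA c a) x = scH c (\<phi> a x)"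
    and phi_mult: "\<forall>a b x. \<phi> (a * b) x = \<phi> a (\<phi> b x)"
    and phi_one: "\<forall>x. \<phi> 1 x = x"
    and phi_star: "\<forall>a x y. ip (\<phi> a x) y = ip x (\<phi> (st a) y)"
    (* delta : \<A> -> B(H) linear *)
    and delta_bdd: "\<forall>a\<in>\<A>. bounded_clinear_op scH (\<delta> a)"
    and delta_add: "\<forall>a\<in>\<A>. \<forall>b\<in>\<A>. \<forall>x. \<delta> (a + b) x = \<delta> a x + \<delta> b x"
    and delta_scale: "\<forall>c. \<forall>a\<in>\<A>. \<forall>x. \<delta> (scA c a) x = scH c (\<delta> a x)"
    (* (1) *)
    and compat: "\<forall>a\<in>\<A> \<inter> A 0. \<forall>\<xi>\<in>H0. \<delta> a \<xi> = \<delta>0 a \<xi> \<and> \<phi> a \<xi> = \<rho> a \<xi>"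
    (* (2) *)
    and mu_pos: "\<mu> > 0"
    and twisted_leibniz: "\<forall>j::int. \<forall>a\<in>\<A> \<inter> A j. \<forall>b\<in>\<A>. \<forall>x.
        \<delta> (a * b) x = \<delta> a (\<phi> b x) + scH (complex_of_real (\<mu> powi j)) (\<phi> a (\<delta> b x))"
    (* (3) *)
    and zR_in: "\<forall>j<k. zR j \<in> \<A> \<inter> A 1"
    and zL_in: "\<forall>j<m. zL j \<in> \<A> \<inter> A 1"
    and zR_sum: "(\<Sum>j<k. zR j * st (zR j)) = 1"
    and zL_sum: "(\<Sum>j<m. st (zL j) * zL j) = 1"
    and zR_delta: "\<forall>x. (\<Sum>j<k. \<phi> (zR j) (\<delta> (st (zR j)) x)) = 0"
    and zL_delta: "\<forall>x. (\<Sum>j<m. \<phi> (st (zL j)) (\<delta> (zL j) x)) = 0"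
    (* the frame for \<A>_n *)
    and frame_in: "\<forall>j<mn. \<zeta> j \<in> \<A> \<inter> A n"
    and frame: "\<forall>x\<in>\<A> \<inter> A n. (\<Sum>j<mn. \<zeta> j * (st (\<zeta> j) * x)) = x"
    and frame_delta: "\<forall>x. (\<Sum>j<mn. \<phi> (\<zeta> j) (\<delta> (st (\<zeta> j)) x)) = 0"
  shows "\<forall>x\<in>\<A> \<inter> A n. \<forall>\<xi>\<in>H0.
           (\<Sum>j<mn. \<phi> (\<zeta> j) (\<delta>0 (st (\<zeta> j) * x) \<xi>))
             = scH (complex_of_real (\<mu> powi (-n))) (\<delta> x \<xi>)"
proof (intro ballI)
  fix x \<xi> assume xA: "x \<in> \<A> \<inter> A n" and \<xi>: "\<xi> \<in> H0"
  have cnsA: "complex_normed_structure scA" using cstar unfolding unital_cstar_algebra_def by blast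
  have cnsH: "complex_normed_structure scH" using hilb unfolding complex_hilbert_def by blast
  have subm: "\<And>a b. a \<in> \<A> \<Longrightarrow> b \<in> \<A> \<Longrightarrow> a * b \<in> \<A>" using sub unfolding unital_star_subalgebra_def by blast
  have subs: "\<And>a. a \<in> \<A> \<Longrightarrow> st a \<in> \<A>" using sub unfolding unital_star_subalgebra_def by blast
  have sub1: "1 \<in> \<A>" using sub unfolding unital_star_subalgebra_def by blast
  have Amult: "\<And>a b i j. a \<in> A i \<Longrightarrow> b \<in> A j \<Longrightarrow> a * b \<in> A (i + j)"
    unfolding A_def using spec_mult[OF cstar action] by blast
  have Astar: "\<And>a i. a \<in> A i \<Longrightarrow> st a \<in> A (- i)"
    unfolding A_def using spec_star[OF cstar action] by blast
  have Aone: "1 \<in> A 0" unfolding A_def using spec_one[OF cstar action] .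
  define e where "e = (\<Sum>j<mn. \<zeta> j * st (\<zeta> j))"
  have efix: "\<And>y. y \<in> \<A> \<inter> A n \<Longrightarrow> e * y = y"
  proof -
    fix y assume "y \<in> \<A> \<inter> A n"
    then have "(\<Sum>j<mn. \<zeta> j * (st (\<zeta> j) * y)) = y" using frame by blast
    then show "e * y = y" unfolding e_def by (simp add: sum_distrib_right mult.assoc)
  qed
  have pos: "1 \<in> Jset (\<A> \<inter> A (int N))" for N
  proof (induction N)
    case 0 then show ?case using sub1 Aone by (auto intro: Jset_base)
  next
    case (Suc N)
    have "(\<Sum>j<k. (zR j * 1) * st (zR j)) \<in> Jset (\<A> \<inter> A (int (Suc N)))"
    proof (rule Jset_sum, rule Jset_rmult, rule Jset_lmult[OF Suc.IH])
      fix j a assume j: "j < k" and a: "a \<in> \<A> \<inter> A (int N)"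
      have "zR j * a \<in> A (1 + int N)" using Amult zR_in j a by blast
      then show "zR j * a \<in> \<A> \<inter> A (int (Suc N))" using subm zR_in j a by (simp add: add.commute)
    qed
    then show ?case using zR_sum by simp
  qed
  have neg: "1 \<in> Jset (\<A> \<inter> A (- int N))" for N
  proof (induction N)
    case 0 then show ?case using sub1 Aone by (auto intro: Jset_base)
  next
    case (Suc N)
    have "(\<Sum>j<m. (st (zL j) * 1) * zL j) \<in> Jset (\<A> \<inter> A (- int (Suc N)))"
    proof (rule Jset_sum, rule Jset_rmult, rule Jset_lmult[OF Suc.IH])
      fix j a assume j: "j < m" and a: "a \<in> \<A> \<inter> A (- int N)"
      have "st (zL j) \<in> A (- 1)" using Astar zL_in j by fastforce
      then have "st (zL j) * a \<in> A (- 1 + - int N)" using Amult a by blast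
      then show "st (zL j) * a \<in> \<A> \<inter> A (- int (Suc N))" using subm subs zL_in j a by (simp add: add.commute)
    qed
    then show ?case using zL_sum by simp
  qed
  have "1 \<in> Jset (\<A> \<inter> A n)"
  proof (cases "n \<ge> 0")
    case True then show ?thesis using pos[of "nat n"] by simp
  next
    case False then show ?thesis using neg[of "nat (- n)"] by simp
  qed
  then have "e * 1 = 1" using Jset_fix efix by blast
  then have e1: "e = 1" by simp
  have philin: "\<And>a. linear (\<phi> a)" using phi_bdd unfolding bounded_clinear_op_def bounded_linear_def by blast
  have phisc: "\<And>a c y. \<phi> a (scH c y) = scH c (\<phi> a y)" using phi_bdd unfolding bounded_clinear_op_def by blast
  have phi0: "\<phi> 0 y = 0" for y
  proof -
    have "\<phi> (0 + 0) y = \<phi> 0 y + \<phi> 0 y" using phi_add by blast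
    then show ?thesis by simp
  qed
  have phisum: "\<phi> (\<Sum>j<(N::nat). f j) y = (\<Sum>j<N. \<phi> (f j) y)" for N f y
    by (induction N) (simp_all add: phi0 phi_add phi_one)
  let ?c = "complex_of_real (\<mu> powi (- n))"
  have trm: "\<phi> (\<zeta> j) (\<delta>0 (st (\<zeta> j) * x) \<xi>) =
      \<phi> (\<zeta> j) (\<delta> (st (\<zeta> j)) (\<phi> x \<xi>)) + scH ?c (\<phi> (\<zeta> j * st (\<zeta> j)) (\<delta> x \<xi>))" if j: "j < mn" for j
  proof -
    have zs: "st (\<zeta> j) \<in> \<A> \<inter> A (- n)" using frame_in j Astar subs by blast
    have "st (\<zeta> j) * x \<in> A (- n + n)" using Amult zs xA by blast
    then have p0: "st (\<zeta> j) * x \<in> \<A> \<inter> A 0" using subm zs xA by simp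
    have "\<delta>0 (st (\<zeta> j) * x) \<xi> = \<delta> (st (\<zeta> j) * x) \<xi>" using compat p0 \<xi> by metis
    also have "\<dots> = \<delta> (st (\<zeta> j)) (\<phi> x \<xi>) + scH ?c (\<phi> (st (\<zeta> j)) (\<delta> x \<xi>))"
      using twisted_leibniz zs xA by blast
    finally show ?thesis
      by (simp add: linear_add[OF philin] phisc phi_mult)
  qed
  have "(\<Sum>j<mn. \<phi> (\<zeta> j) (\<delta>0 (st (\<zeta> j) * x) \<xi>)) =
      (\<Sum>j<mn. \<phi> (\<zeta> j) (\<delta> (st (\<zeta> j)) (\<phi> x \<xi>))) + (\<Sum>j<mn. scH ?c (\<phi> (\<zeta> j * st (\<zeta> j)) (\<delta> x \<xi>)))"
    using trm by (simp add: sum.distrib)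
  also have "\<dots> = scH ?c (\<phi> e (\<delta> x \<xi>))"
    using frame_delta by (simp add: cns_sum[OF cnsH, symmetric] e_def phisum)
  also have "\<dots> = scH ?c (\<delta> x \<xi>)" using e1 phi_one by simp
  finally show "(\<Sum>j<mn. \<phi> (\<zeta> j) (\<delta>0 (st (\<zeta> j) * x) \<xi>)) = scH ?c (\<delta> x \<xi>)" .
qed

end
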